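(* Let $p<q$ be coprime positive integers. Define $\mu:\mathbb Z^3\to\mathbb Z^3$ by $\mu(d_0,d_1,d_j)=(d_0-pd_1+qd_j,\;d_1-d_j,\;pd_1-qd_j)$, let $\Lambda=\mu(\mathbb Z_{\ge0}^3)$, and for $(n,c)\in\mathbb Z^2$ such that $(n,c,\omega)\in\Lambda$ for some $\omega$, let $\omega_{(n,c)}=\min\{\omega\in\mathbb Z:(n,c,\omega)\in\Lambda\}$. Then for every $(n,c,\omega)\in\Lambda$, one has $n+\omega<q-p$ if and only if $\omega=\omega_{(n,c)}$.
   Context: The minimum $\omega_{(n,c)}$ exists whenever the set is nonempty (for $(d_0,d_1,d_j)\in\mathbb Z_{\ge 0}^3$ with $\mu(d_0,d_1,d_j)=(n,c,\omega)$ one has $d_0=n+\omega\ge0$). Here $\mu$ records, for a monomial $X_0^{d_0}X_1^{d_1}X_j^{d_j}$ in $\mathbb C[X_0,X_1,X_j]$ ($j\in\{3,4\}$), its $\mathbb C^*$-weight $n$, the difference $c=d_1-d_j$ and an auxiliary weight $\omega$. *)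

theory Defs
  imports Main
begin

definition mu :: "int \<Rightarrow> int \<Rightarrow> int \<times> int \<times> int \<Rightarrow> int \<times> int \<times> int" where
  "mu p q = (\<lambda>(d0, d1, dj). (d0 - p * d1 + q * dj, d1 - dj, p * d1 - q * dj))"

definition Lambda :: "int \<Rightarrow> int \<Rightarrow> (int \<times> int \<times> int) set" where
  "Lambda p q = mu p q ` {(d0, d1, dj). 0 \<le> d0 \<and> 0 \<le> d1 \<and> 0 \<le> dj}"

text \<open>omega_(n,c) = min of omega with (n,c,omega) in Lambda (meaningful when nonempty).\<close>
definition omega_min :: "int \<Rightarrow> int \<Rightarrow> int \<Rightarrow> int \<Rightarrow> int" where
  "omega_min p q n c = (LEAST w. (n, c, w) \<in> Lambda p q)"

end

theory Submission
  imports Defs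
begin

lemma memL:
  assumes "(n, c, w) \<in> Lambda p q"
  obtains d1 dj where "0 \<le> n + w" "0 \<le> d1" "0 \<le> dj" "c = d1 - dj" "w = p * d1 - q * dj"
  using assms unfolding Lambda_def mu_def by auto

lemma stepL:
  assumes "(n, c, w) \<in> Lambda p q" "0 \<le> k" "0 \<le> n + w - (q - p) * k"
  shows "(n, c, w - (q - p) * k) \<in> Lambda p q"
proof -
  obtain d1 dj where h: "0 \<le> n + w" "0 \<le> d1" "0 \<le> dj" "c = d1 - dj" "w = p * d1 - q * dj"
    using memL[OF assms(1)] by blast
  have "mu p q (n + w - (q - p) * k, d1 + k, dj + k) = (n, c, w - (q - p) * k)"
    using h unfolding mu_def by (simp add: algebra_simps)
  moreover have "(n + w - (q - p) * k, d1 + k, dj + k) \<in> {(d0, d1, dj). 0 \<le> d0 \<and> 0 \<le> d1 \<and> 0 \<le> dj}"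
    using h assms by auto
  ultimately show ?thesis unfolding Lambda_def by (metis image_eqI)
qed

lemma minL:
  assumes "p < q" "(n, c, w) \<in> Lambda p q" "(n, c, w') \<in> Lambda p q" "n + w < q - p"
  shows "w \<le> w'"
proof -
  obtain d1 dj where h: "0 \<le> n + w" "0 \<le> d1" "0 \<le> dj" "c = d1 - dj" "w = p * d1 - q * dj"
    using memL[OF assms(2)] by blast
  obtain e1 ej where g: "0 \<le> n + w'" "0 \<le> e1" "0 \<le> ej" "c = e1 - ej" "w' = p * e1 - q * ej"
    using memL[OF assms(3)] by blast
  define k where "k = e1 - d1"
  have ej: "ej = dj + k" using h g k_def by simp
  have e1: "e1 = d1 + k" using k_def by simp
  have w': "w' = w - (q - p) * k" using h(5) g(5) ej e1 by (simp add: algebra_simps)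
  have "(q - p) * k < (q - p) * 1" using g(1) w' assms(4) by simp
  then have "k < 1" using assms(1) by (simp add: mult_less_cancel_left)
  then have "k \<le> 0" by simp
  then have "(q - p) * k \<le> 0" using assms(1) by (simp add: mult_nonneg_nonpos)
  then show ?thesis using w' by simp
qed

lemma leastL:
  assumes "p < q" "(n, c, w) \<in> Lambda p q" "n + w < q - p"
  shows "w = omega_min p q n c"
  unfolding omega_min_def
  by (rule Least_equality[symmetric]) (use assms minL in auto)

theorem lemma4p15:
  fixes p q n c w :: int
  assumes "0 < p" and "p < q" and "coprime p q"
    and "(n, c, w) \<in> Lambda p q"
  shows "n + w < q - p \<longleftrightarrow> w = omega_min p q n c"
proof
  assume "n + w < q - p" then show "w = omega_min p q n c" using leastL assms by blast
next
  assume eq: "w = omega_min p q n c"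
  have nw: "0 \<le> n + w" using memL[OF assms(4)] by blast
  define k where "k = (n + w) div (q - p)"
  have qp: "0 < q - p" using assms by simp
  have k0: "0 \<le> k" unfolding k_def using nw qp by (simp add: pos_imp_zdiv_nonneg_iff)
  have dm: "n + w - (q - p) * k = (n + w) mod (q - p)"
    unfolding k_def by (simp add: minus_div_mult_eq_mod[symmetric] algebra_simps)
  have r: "0 \<le> n + w - (q - p) * k" "n + w - (q - p) * k < q - p"
    using dm qp by simp_all
  have m: "(n, c, w - (q - p) * k) \<in> Lambda p q" using stepL[OF assms(4) k0 r(1)] .
  have "w - (q - p) * k = omega_min p q n c"
    using leastL[OF assms(2) m] r(2) by simp
  then have "w - (q - p) * k = w" using eq by simp
  then show "n + w < q - p" using r(2) qp by auto
qed

end
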